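(* Let $A,B$ be automata, $R\subseteq\mathrm{states}(A)\times\mathrm{states}(B)$, and suppose the execution fragments $\alpha$ of $A$ and $\alpha'$ of $B$ are $R$-related via an index relation $I$. Then $\alpha'$ has a prefix $\alpha''$ (an execution fragment that is an initial segment of $\alpha'$, possibly $\alpha'$ itself) such that $\alpha$ and $\alpha''$ are $R$-related via a reduced index relation $J\subseteq I$.
   Context: An automaton $A$ consists of a set $\mathrm{states}(A)$ of states, a nonempty set $\mathrm{start}(A)\subseteq\mathrm{states}(A)$ of start states, a set $\mathrm{acts}(A)$ of actions containing a distinguished internal action $\tau$, and a set $\mathrm{steps}(A)\subseteq\mathrm{states}(A)\times\mathrm{acts}(A)\times\mathrm{states}(A)$ of steps; write $s\xrightarrow{a}_A t$ for $(s,a,t)\in\mathrm{steps}(A)$. An execution fragment of $A$ is a finite or infinite alternating sequence $s_0a_1s_1a_2s_2\cdots$ of states and actions, beginning with a state and, if finite, ending with a state, such that $s_{i-1}\xrightarrow{a_i}_A s_i$ for all $i>0$; its index set $\mathrm{Index}(\alpha)$ is the set of indices $i$ of its states $s_i$. Execution correspondence: Let $R\subseteq\mathrm{states}(A)\times\mathrm{states}(B)$ and let $\alpha=s_0a_1s_1\cdots$ and $\alpha'=u_0b_1u_1\cdots$ be execution fragments of $A$ and $B$. An index relation over $R$ between $\alpha$ and $\alpha'$ is a relation $I\subseteq\mathrm{Index}(\alpha)\times\mathrm{Index}(\alpha')$ such that (1) $(i,j)\in I$ implies $(s_i,u_j)\in R$; (2) $(i,j)\in I$, $(i',j')\in I$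 and $i<i'$ imply $j\le j'$; (3) every index of $\alpha$ is related by $I$ to some index of $\alpha'$ and every index of $\alpha'$ is related by $I$ to some index of $\alpha$; (4) if $(i,j),(i+1,j+1)\in I$ then $a_{i+1}=b_{j+1}$; if $(i,j),(i+1,j)\in I$ then $a_{i+1}=\tau$; if $(i,j),(i,j+1)\in I$ then $b_{j+1}=\tau$. The fragments $\alpha,\alpha'$ are $R$-related via $I$ if $I$ is such an index relation. An index relation $I$ between $\alpha$ and $\alpha'$ is reduced if (1) when $\alpha$ is finite, $I$ relates the final index of $\alpha$ only to the final index of $\alpha'$ (in particular $\alpha'$ is then finite); and (2) $I$ is N-free: $(i,j)\in I$ and $(i+1,j+1)\in I$ imply $(i+1,j)\notin I$ and $(i,j+1)\notin I$. *)

theory Defs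
  imports Main "HOL-Library.Extended_Nat"
begin

record ('s, 'a) automaton =
  states :: "'s set"
  start  :: "'s set"
  acts   :: "'a set"
  tau    :: 'a
  steps  :: "('s \<times> 'a \<times> 's) set"

definition is_automaton :: "('s, 'a) automaton \<Rightarrow> bool" where
  "is_automaton A \<longleftrightarrow> start A \<noteq> {} \<and> start A \<subseteq> states A \<and> tau A \<in> acts A
     \<and> steps A \<subseteq> states A \<times> acts A \<times> states A"

(* A (finite or infinite) alternating sequence s_0 a_1 s_1 a_2 s_2 ...
   represented by the state sequence fst_state, the action sequence (act i = a_i, i >= 1)
   and the number of steps len (infinity for infinite sequences).
   Values of st at i > len and of act at i = 0 or i > len are irrelevant. *)
record ('s, 'a) frag =
  st  :: "nat \<Rightarrow> 's"
  act :: "nat \<Rightarrow> 'a"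
  len :: enat

definition Index :: "('s, 'a) frag \<Rightarrow> nat set" where
  "Index \<alpha> = {i. enat i \<le> len \<alpha>}"

definition exec_frag :: "('s, 'a) automaton \<Rightarrow> ('s, 'a) frag \<Rightarrow> bool" where
  "exec_frag A \<alpha> \<longleftrightarrow> st \<alpha> 0 \<in> states A \<and>
     (\<forall>i. 0 < i \<and> enat i \<le> len \<alpha> \<longrightarrow> (st \<alpha> (i - 1), act \<alpha> i, st \<alpha> i) \<in> steps A)"

definition is_finite_frag :: "('s, 'a) frag \<Rightarrow> bool" where
  "is_finite_frag \<alpha> \<longleftrightarrow> len \<alpha> \<noteq> \<infinity>"

definition frag_prefix :: "('s, 'a) frag \<Rightarrow> ('s, 'a) frag \<Rightarrow> bool" where
  "frag_prefix \<beta> \<alpha> \<longleftrightarrow> len \<beta> \<le> len \<alpha> \<and>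
     (\<forall>i. enat i \<le> len \<beta> \<longrightarrow> st \<beta> i = st \<alpha> i) \<and>
     (\<forall>i. 0 < i \<and> enat i \<le> len \<beta> \<longrightarrow> act \<beta> i = act \<alpha> i)"

definition index_relation ::
  "('s, 'a) automaton \<Rightarrow> ('t, 'a) automaton \<Rightarrow> ('s \<times> 't) set \<Rightarrow>
   ('s, 'a) frag \<Rightarrow> ('t, 'a) frag \<Rightarrow> (nat \<times> nat) set \<Rightarrow> bool" where
  "index_relation A B R \<alpha> \<alpha>' I \<longleftrightarrow>
     I \<subseteq> Index \<alpha> \<times> Index \<alpha>' \<and>
     (\<forall>i j. (i, j) \<in> I \<longrightarrow> (st \<alpha> i, st \<alpha>' j) \<in> R) \<and>
     (\<forall>i j i' j'. (i, j) \<in> I \<and> (i', j') \<in> I \<and> i < i' \<longrightarrow> j \<le> j') \<and>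
     (\<forall>i \<in> Index \<alpha>. \<exists>j. (i, j) \<in> I) \<and>
     (\<forall>j \<in> Index \<alpha>'. \<exists>i. (i, j) \<in> I) \<and>
     (\<forall>i j. (i, j) \<in> I \<and> (i + 1, j + 1) \<in> I \<longrightarrow> act \<alpha> (i + 1) = act \<alpha>' (j + 1)) \<and>
     (\<forall>i j. (i, j) \<in> I \<and> (i + 1, j) \<in> I \<longrightarrow> act \<alpha> (i + 1) = tau A) \<and>
     (\<forall>i j. (i, j) \<in> I \<and> (i, j + 1) \<in> I \<longrightarrow> act \<alpha>' (j + 1) = tau B)"

definition R_related_via ::
  "('s, 'a) automaton \<Rightarrow> ('t, 'a) automaton \<Rightarrow> ('s \<times> 't) set \<Rightarrow>
   ('s, 'a) frag \<Rightarrow> ('t, 'a) frag \<Rightarrow> (nat \<times> nat) set \<Rightarrow> bool" where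
  "R_related_via A B R \<alpha> \<alpha>' I \<longleftrightarrow>
     exec_frag A \<alpha> \<and> exec_frag B \<alpha>' \<and> index_relation A B R \<alpha> \<alpha>' I"

definition reduced :: "('s, 'a) frag \<Rightarrow> ('t, 'a) frag \<Rightarrow> (nat \<times> nat) set \<Rightarrow> bool" where
  "reduced \<alpha> \<alpha>' I \<longleftrightarrow>
     (\<forall>n. len \<alpha> = enat n \<longrightarrow> (\<forall>j. (n, j) \<in> I \<longrightarrow> len \<alpha>' = enat j)) \<and>
     (\<forall>i j. (i, j) \<in> I \<and> (i + 1, j + 1) \<in> I \<longrightarrow> (i + 1, j) \<notin> I \<and> (i, j + 1) \<notin> I)"

end

theory Submission
  imports Defs
begin

lemma index_relation_subset:
  assumes IR: "index_relation A B R \<alpha> \<alpha>' I" and JI: "J \<subseteq> I"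
    and sub: "J \<subseteq> Index \<alpha> \<times> Index \<beta>"
    and rows: "\<forall>i\<in>Index \<alpha>. \<exists>j. (i, j) \<in> J"
    and cols: "\<forall>j\<in>Index \<beta>. \<exists>i. (i, j) \<in> J"
    and ac: "act \<beta> = act \<alpha>'" and sb: "st \<beta> = st \<alpha>'"
  shows "index_relation A B R \<alpha> \<beta> J"
proof -
  have Rr: "\<forall>i j. (i, j) \<in> I \<longrightarrow> (st \<alpha> i, st \<alpha>' j) \<in> R"
    and mono: "\<forall>i j i' j'. (i, j) \<in> I \<and> (i', j') \<in> I \<and> i < i' \<longrightarrow> j \<le> j'"
    and a1: "\<forall>i j. (i, j) \<in> I \<and> (i + 1, j + 1) \<in> I \<longrightarrow> act \<alpha> (i + 1) = act \<alpha>' (j + 1)"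
    and a2: "\<forall>i j. (i, j) \<in> I \<and> (i + 1, j) \<in> I \<longrightarrow> act \<alpha> (i + 1) = tau A"
    and a3: "\<forall>i j. (i, j) \<in> I \<and> (i, j + 1) \<in> I \<longrightarrow> act \<alpha>' (j + 1) = tau B"
    using IR unfolding index_relation_def by blast+
  show ?thesis unfolding index_relation_def ac sb
    apply (intro conjI)
    using sub apply blast
    using JI Rr apply blast
    using JI mono apply blast
    using rows apply blast
    using cols apply blast
    using JI a1 apply blast
    using JI a2 apply blast
    using JI a3 apply blast
    done
qed

lemma reduce_nfree:
  assumes IR: "index_relation A B R \<alpha> \<alpha>' I"
  shows "\<exists>J\<subseteq>I. index_relation A B R \<alpha> \<alpha>' J \<and>
     (\<forall>i j. (i, j) \<in> J \<and> (i + 1, j + 1) \<in> J \<longrightarrow> (i + 1, j) \<notin> J \<and> (i, j + 1) \<notin> J)"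
proof -
  define vh where "vh i j \<longleftrightarrow> 0 < j \<and> (i, j - 1) \<in> I \<and> (i + 1, j) \<in> I" for i j
  define hv where "hv i j \<longleftrightarrow> 0 < i \<and> (i - 1, j) \<in> I \<and> (i, j + 1) \<in> I \<and>
      \<not> (0 < j \<and> (i - 1, j - 1) \<in> I) \<and> (i + 1, j + 1) \<notin> I" for i j
  define J where "J = {(i, j). (i, j) \<in> I \<and> \<not> vh i j \<and> \<not> hv i j}"
  have sub: "I \<subseteq> Index \<alpha> \<times> Index \<alpha>'"
    and Rr: "\<forall>i j. (i, j) \<in> I \<longrightarrow> (st \<alpha> i, st \<alpha>' j) \<in> R"
    and mono: "\<And>i j i' j'. (i, j) \<in> I \<Longrightarrow> (i', j') \<in> I \<Longrightarrow> i < i' \<Longrightarrow> j \<le> j'"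
    and rows: "\<forall>i \<in> Index \<alpha>. \<exists>j. (i, j) \<in> I"
    and cols: "\<forall>j \<in> Index \<alpha>'. \<exists>i. (i, j) \<in> I"
    and a1: "\<forall>i j. (i, j) \<in> I \<and> (i + 1, j + 1) \<in> I \<longrightarrow> act \<alpha> (i + 1) = act \<alpha>' (j + 1)"
    and a2: "\<forall>i j. (i, j) \<in> I \<and> (i + 1, j) \<in> I \<longrightarrow> act \<alpha> (i + 1) = tau A"
    and a3: "\<forall>i j. (i, j) \<in> I \<and> (i, j + 1) \<in> I \<longrightarrow> act \<alpha>' (j + 1) = tau B"
    using IR unfolding index_relation_def by blast+
  have JI: "J \<subseteq> I" unfolding J_def by auto
  have rowsJ: "\<exists>j. (i, j) \<in> J" if iI: "i \<in> Index \<alpha>" for i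
  proof -
    from rows iI obtain j0 where "(i, j0) \<in> I" by blast
    define a where "a = (LEAST j. (i, j) \<in> I)"
    have aI: "(i, a) \<in> I" unfolding a_def by (rule LeastI) fact
    have amin: "\<And>j. (i, j) \<in> I \<Longrightarrow> a \<le> j" unfolding a_def by (rule Least_le)
    have nvh: "\<not> vh i a"
    proof
      assume "vh i a"
      then have "0 < a" "(i, a - 1) \<in> I" unfolding vh_def by auto
      from amin[OF this(2)] this(1) show False by simp
    qed
    show ?thesis
    proof (cases "hv i a")
      case False
      then show ?thesis using aI nvh unfolding J_def by blast
    next
      case True
      then have h: "0 < i" "(i - 1, a) \<in> I" "(i, a + 1) \<in> I" "(i + 1, a + 1) \<notin> I"
        unfolding hv_def by auto
      have "\<not> vh i (a + 1)" using h(4) unfolding vh_def by auto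
      moreover have "\<not> hv i (a + 1)"
      proof
        assume "hv i (a + 1)"
        then have "(i - 1, a + 1) \<in> I" unfolding hv_def by auto
        from mono[OF this aI] h(1) show False by simp
      qed
      ultimately show ?thesis using h(3) unfolding J_def by blast
    qed
  qed
  have colsJ: "\<exists>i. (i, j) \<in> J" if jI: "j \<in> Index \<alpha>'" for j
  proof -
    from cols jI obtain i0 where "(i0, j) \<in> I" by blast
    define a where "a = (LEAST i. (i, j) \<in> I)"
    have aI: "(a, j) \<in> I" unfolding a_def by (rule LeastI) fact
    have amin: "\<And>i. (i, j) \<in> I \<Longrightarrow> a \<le> i" unfolding a_def by (rule Least_le)
    have nhv: "\<not> hv a j"
    proof
      assume "hv a j"
      then have "0 < a" "(a - 1, j) \<in> I" unfolding hv_def by auto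
      from amin[OF this(2)] this(1) show False by simp
    qed
    show ?thesis
    proof (cases "vh a j")
      case False
      then show ?thesis using aI nhv unfolding J_def by blast
    next
      case True
      then have h: "0 < j" "(a, j - 1) \<in> I" "(a + 1, j) \<in> I"
        unfolding vh_def by auto
      have "\<not> vh (a + 1) j"
      proof
        assume "vh (a + 1) j"
        then have "(a + 1, j - 1) \<in> I" unfolding vh_def by auto
        from mono[OF aI this] h(1) show False by simp
      qed
      moreover have "\<not> hv (a + 1) j" using h(1,2) unfolding hv_def by auto
      ultimately show ?thesis using h(3) unfolding J_def by blast
    qed
  qed
  have nfree: "(i + 1, j) \<notin> J \<and> (i, j + 1) \<notin> J" if "(i, j) \<in> J" "(i + 1, j + 1) \<in> J" for i j
  proof
    have P: "(i, j) \<in> I" "(i + 1, j + 1) \<in> I" "\<not> vh i j" "\<not> vh (i+1) (j+1)"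
      using that unfolding J_def by auto
    show "(i, j + 1) \<notin> J" using P unfolding J_def vh_def by auto
    show "(i + 1, j) \<notin> J"
    proof
      assume c: "(i + 1, j) \<in> J"
      then have "(i + 1, j) \<in> I" "\<not> hv (i + 1) j" unfolding J_def by auto
      then have "(0 < j \<and> (i, j - 1) \<in> I) \<or> (i + 2, j + 1) \<in> I"
        using P unfolding hv_def by auto
      then show False
      proof
        assume "0 < j \<and> (i, j - 1) \<in> I"
        then have "vh i j" using \<open>(i + 1, j) \<in> I\<close> unfolding vh_def by auto
        then show False using P by simp
      next
        assume "(i + 2, j + 1) \<in> I"
        then have "vh (i + 1) (j + 1)" using \<open>(i + 1, j) \<in> I\<close> unfolding vh_def
          by (simp add: numeral_2_eq_2)
        then show False using P by simp
      qed
    qed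
  qed
  have "index_relation A B R \<alpha> \<alpha>' J"
    by (rule index_relation_subset[OF IR JI]) (use JI sub rowsJ colsJ in auto)
  then show ?thesis using JI nfree by blast
qed

theorem mainTheorem11:
  fixes A :: "('s, 'a) automaton" and B :: "('t, 'a) automaton"
    and R :: "('s \<times> 't) set"
    and \<alpha> :: "('s, 'a) frag" and \<alpha>' :: "('t, 'a) frag" and I :: "(nat \<times> nat) set"
  assumes "is_automaton A" and "is_automaton B"
    and "R \<subseteq> states A \<times> states B"
    and "R_related_via A B R \<alpha> \<alpha>' I"
  shows "\<exists>\<alpha>'' J. frag_prefix \<alpha>'' \<alpha>' \<and> J \<subseteq> I \<and>
           R_related_via A B R \<alpha> \<alpha>'' J \<and> reduced \<alpha> \<alpha>'' J"
proof -
  from assms(4) have EA: "exec_frag A \<alpha>" and EB: "exec_frag B \<alpha>'"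
    and IR: "index_relation A B R \<alpha> \<alpha>' I"
    unfolding R_related_via_def by auto
  obtain J where JI: "J \<subseteq> I" and JR: "index_relation A B R \<alpha> \<alpha>' J"
    and nf: "\<forall>i j. (i, j) \<in> J \<and> (i + 1, j + 1) \<in> J \<longrightarrow> (i + 1, j) \<notin> J \<and> (i, j + 1) \<notin> J"
    using reduce_nfree[OF IR] by blast
  have sub: "J \<subseteq> Index \<alpha> \<times> Index \<alpha>'"
    and Rr: "\<forall>i j. (i, j) \<in> J \<longrightarrow> (st \<alpha> i, st \<alpha>' j) \<in> R"
    and mono: "\<And>i j i' j'. (i, j) \<in> J \<Longrightarrow> (i', j') \<in> J \<Longrightarrow> i < i' \<Longrightarrow> j \<le> j'"
    and rows: "\<forall>i \<in> Index \<alpha>. \<exists>j. (i, j) \<in> J"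
    and cols: "\<forall>j \<in> Index \<alpha>'. \<exists>i. (i, j) \<in> J"
    and a1: "\<forall>i j. (i, j) \<in> J \<and> (i + 1, j + 1) \<in> J \<longrightarrow> act \<alpha> (i + 1) = act \<alpha>' (j + 1)"
    and a2: "\<forall>i j. (i, j) \<in> J \<and> (i + 1, j) \<in> J \<longrightarrow> act \<alpha> (i + 1) = tau A"
    and a3: "\<forall>i j. (i, j) \<in> J \<and> (i, j + 1) \<in> J \<longrightarrow> act \<alpha>' (j + 1) = tau B"
    using JR unfolding index_relation_def by blast+
  show ?thesis
  proof (cases "len \<alpha>")
    case infinity
    have "frag_prefix \<alpha>' \<alpha>'" unfolding frag_prefix_def by simp
    moreover have "reduced \<alpha> \<alpha>' J" unfolding reduced_def
    proof (intro conjI)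
      show "\<forall>n. len \<alpha> = enat n \<longrightarrow> (\<forall>j. (n, j) \<in> J \<longrightarrow> len \<alpha>' = enat j)"
        using infinity by simp
    qed (rule nf)
    ultimately show ?thesis using JI EA EB JR unfolding R_related_via_def by blast
  next
    case (enat n)
    have nI: "n \<in> Index \<alpha>" unfolding Index_def using enat by simp
    then obtain j0 where "(n, j0) \<in> J" using rows by blast
    define m where "m = (LEAST j. (n, j) \<in> J)"
    have mJ: "(n, m) \<in> J" unfolding m_def by (rule LeastI) fact
    have mmin: "\<And>j. (n, j) \<in> J \<Longrightarrow> m \<le> j" unfolding m_def by (rule Least_le)
    have mle: "enat m \<le> len \<alpha>'" using sub mJ unfolding Index_def by auto
    define \<beta> where "\<beta> = \<alpha>'\<lparr>len := enat m\<rparr>"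
    define K where "K = {(i, j). (i, j) \<in> J \<and> j \<le> m}"
    have Ib: "Index \<beta> = {..m}" unfolding Index_def \<beta>_def by auto
    have stb: "st \<beta> = st \<alpha>'" "act \<beta> = act \<alpha>'" "len \<beta> = enat m" unfolding \<beta>_def by simp_all
    have pre: "frag_prefix \<beta> \<alpha>'" unfolding frag_prefix_def using stb mle by simp
    have EBb: "exec_frag B \<beta>" using EB mle unfolding exec_frag_def stb
      by (meson order_trans)
    have rowsK: "\<exists>j. (i, j) \<in> K" if iI: "i \<in> Index \<alpha>" for i
    proof -
      have "i \<le> n" using iI enat unfolding Index_def by simp
      show ?thesis
      proof (cases "i = n")
        case True then show ?thesis using mJ unfolding K_def by auto
      next
        case False
        then have "i < n" using \<open>i \<le> n\<close> by simp
        from rows iI obtain j where "(i, j) \<in> J" by blast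
        moreover have "j \<le> m" using mono[OF \<open>(i, j) \<in> J\<close> mJ \<open>i < n\<close>] .
        ultimately show ?thesis unfolding K_def by auto
      qed
    qed
    have colsK: "\<exists>i. (i, j) \<in> K" if "j \<in> Index \<beta>" for j
    proof -
      have "j \<le> m" using that Ib by simp
      then have "j \<in> Index \<alpha>'" using mle unfolding Index_def
        by (meson enat_ord_simps(1) mem_Collect_eq order_trans)
      then obtain i where "(i, j) \<in> J" using cols by blast
      then show ?thesis using \<open>j \<le> m\<close> unfolding K_def by auto
    qed
    have KJ: "K \<subseteq> J" unfolding K_def by auto
    have "K \<subseteq> Index \<alpha> \<times> Index \<beta>" using sub Ib unfolding K_def by auto
    then have KR: "index_relation A B R \<alpha> \<beta> K"
      by (rule index_relation_subset[OF JR KJ]) (use rowsK colsK stb in auto)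
    have "reduced \<alpha> \<beta> K"
      unfolding reduced_def
    proof (rule conjI; intro allI impI)
      fix n' j assume "len \<alpha> = enat n'" "(n', j) \<in> K"
      then have "n' = n" "(n, j) \<in> J" "j \<le> m" using enat unfolding K_def by auto
      then have "j = m" using mmin[of j] by simp
      then show "len \<beta> = enat j" using stb by simp
    next
      fix i j assume c: "(i, j) \<in> K \<and> (i + 1, j + 1) \<in> K"
      then have "(i, j) \<in> J" "(i + 1, j + 1) \<in> J" using KJ by auto
      then have "(i + 1, j) \<notin> J \<and> (i, j + 1) \<notin> J" using nf by blast
      then show "(i + 1, j) \<notin> K \<and> (i, j + 1) \<notin> K" using KJ by auto
    qed
    moreover have "K \<subseteq> I" using KJ JI by (rule order_trans)
    moreover have "R_related_via A B R \<alpha> \<beta> K" unfolding R_related_via_def using EA EBb KR by simp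
    ultimately show ?thesis using pre by (intro exI[of _ \<beta>] exI[of _ K] conjI)
  qed
qed

end
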